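(* Let $d\ge 1$, $\ell\in\{1,\dots,d\}$, and $\mu,\theta,\eta,k>0$. Consider a continuous-time Markov chain $(X(t),Z_1(t),Z_2(t))_{t\ge0}$ on $\mathbb{Z}_{\ge0}^d\times\mathbb{Z}_{\ge0}\times\mathbb{Z}_{\ge0}$, $X=(X_1,\dots,X_d)$, describing a stochastic reaction network on species $\mathbf{X}_1,\dots,\mathbf{X}_d$ (with arbitrary reactions whose stoichiometries involve only the species $\mathbf{X}_1,\dots,\mathbf{X}_d$ and whose propensities depend only on $X$) interconnected with the antithetic integral controller consisting of the reactions $$\emptyset\xrightarrow{\ \mu\ }\mathbf{Z}_1,\qquad \emptyset\xrightarrow{\ \theta X_\ell\ }\mathbf{Z}_2,\qquad \mathbf{Z}_1+\mathbf{Z}_2\xrightarrow{\ \eta Z_1Z_2\ }\emptyset,\qquad \emptyset\xrightarrow{\ kZ_1\ }\mathbf{X}_1,$$ and possibly additionally a feedback reaction $\emptyset\xrightarrow{F(X_\ell)}\mathbf{X}_1$ with a nonnegative propensity function $F$ (the labels over the arrows denote the propensities). Let $\mathcal{A}$ denote the generator of this chain and let $\pi$ be a stationary distribution of the chain such that all the expectations below are finite and $\mathbb{E}_\pi[\mathcal{A}f]=0$ for each of the functions $f\in\{z_1,\,z_2,\,z_1^2,\,z_2^2,\,(z_1-z_2)^2\}$. Then, regardless of the reactions and parameters of the controlled network, $$\mathrm{Cov}_\pi(X_\ell,Z_1-Z_2)=\frac{\mu}{\theta},\qquad \mathbb{E}_\pi[Z_1Z_2]=\frac{\mu}{\eta},$$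 $$\mathbb{E}_\pi[Z_1^2Z_2]=\frac{\mu}{\eta}\bigl(1+\mathbb{E}_\pi[Z_1]\bigr),\qquad \mathbb{E}_\pi[Z_1Z_2^2]=\frac{\mu+\theta\,\mathbb{E}_\pi[X_\ell Z_2]}{\eta}.$$
   Context: A reaction with propensity $\lambda(x,z)$ and stoichiometric (jump) vector $\zeta$ makes the Markov chain jump from state $(x,z)$ to $(x,z)+\zeta$ at rate $\lambda(x,z)$; the generator acts on functions $f$ by $(\mathcal{A}f)(x,z)=\sum_{\text{reactions}}\lambda(x,z)\bigl(f((x,z)+\zeta)-f(x,z)\bigr)$. $\mathbb{E}_\pi$ and $\mathrm{Cov}_\pi$ denote expectation and covariance under $\pi$. The paper states these identities "under the assumption that these invariants exist, i.e. they are finite"; the finiteness/stationary moment equation assumption above formalizes this. *)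

theory Defs
  imports "HOL-Probability.Probability"
begin

text \<open>States of the chain: (X, Z1, Z2) with X a vector of copy numbers indexed by
  the finite species type 'd (so d = CARD('d)).\<close>
type_synonym 'd state = "('d \<Rightarrow> nat) \<times> nat \<times> nat"
type_synonym 'd jump = "('d \<Rightarrow> int) \<times> int \<times> int"

type_synonym 'd reaction = "('d state \<Rightarrow> real) \<times> 'd jump"

definition shift :: "'d state \<Rightarrow> 'd jump \<Rightarrow> 'd state" where
  "shift s \<zeta> = ((\<lambda>i. nat (int (fst s i) + fst \<zeta> i)),
                 nat (int (fst (snd s)) + fst (snd \<zeta>)),
                 nat (int (snd (snd s)) + snd (snd \<zeta>)))"

definition generator :: "'d reaction list \<Rightarrow> ('d state \<Rightarrow> real) \<Rightarrow> 'd state \<Rightarrow> real" where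
  "generator R f s = (\<Sum>(lam, \<zeta>)\<leftarrow>R. lam s * (f (shift s \<zeta>) - f s))"

text \<open>Full reaction list: controlled network reactions (propensities depending on X
  only, stoichiometry on X only), antithetic integral controller, feedback F(X_l)
  into X_1 (F = 0 means no feedback).\<close>
definition full_reactions ::
  "((('d \<Rightarrow> nat) \<Rightarrow> real) \<times> ('d \<Rightarrow> int)) list \<Rightarrow> 'd \<Rightarrow> 'd \<Rightarrow>
   real \<Rightarrow> real \<Rightarrow> real \<Rightarrow> real \<Rightarrow> (nat \<Rightarrow> real) \<Rightarrow> 'd reaction list" where
  "full_reactions N i1 l \<mu> \<theta> \<eta> k F =
     map (\<lambda>(a, \<nu>). ((\<lambda>s. a (fst s)), (\<nu>, 0, 0))) N @
     [ ((\<lambda>s. \<mu>), (\<lambda>_. 0, 1, 0)),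
       ((\<lambda>s. \<theta> * real (fst s l)), (\<lambda>_. 0, 0, 1)),
       ((\<lambda>s. \<eta> * real (fst (snd s)) * real (snd (snd s))), (\<lambda>_. 0, -1, -1)),
       ((\<lambda>s. k * real (fst (snd s))), (\<lambda>i. if i = i1 then 1 else 0, 0, 0)),
       ((\<lambda>s. F (fst s l)), (\<lambda>i. if i = i1 then 1 else 0, 0, 0)) ]"

text \<open>Stationarity (global balance, pi Q = 0): for each state s,
  E_pi[A 1_{s}] = 0 (inflow into s equals outflow from s).\<close>
definition stationary :: "'d reaction list \<Rightarrow> 'd state pmf \<Rightarrow> bool" where
  "stationary R \<pi> \<longleftrightarrow> (\<forall>s. integrable (measure_pmf \<pi>) (generator R (\<lambda>x. indicator {s} x))
      \<and> measure_pmf.expectation \<pi> (generator R (\<lambda>x. indicator {s} x)) = 0)"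

definition cov_pmf :: "'a pmf \<Rightarrow> ('a \<Rightarrow> real) \<Rightarrow> ('a \<Rightarrow> real) \<Rightarrow> real" where
  "cov_pmf p f g = measure_pmf.expectation p (\<lambda>x. (f x - measure_pmf.expectation p f) *
                                                (g x - measure_pmf.expectation p g))"

definition zz1 :: "'d state \<Rightarrow> real" where "zz1 s = real (fst (snd s))"
definition zz2 :: "'d state \<Rightarrow> real" where "zz2 s = real (snd (snd s))"
definition xx :: "'d \<Rightarrow> 'd state \<Rightarrow> real" where "xx i s = real (fst s i)"

end

theory Submission
  imports Defs
begin

lemma gen_z:
  fixes g :: "real \<Rightarrow> real \<Rightarrow> real"
  shows "generator (full_reactions N i1 l \<mu> \<theta> \<eta> k F) (\<lambda>s. g (zz1 s) (zz2 s)) s =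
    \<mu> * (g (zz1 s + 1) (zz2 s) - g (zz1 s) (zz2 s))
  + \<theta> * xx l s * (g (zz1 s) (zz2 s + 1) - g (zz1 s) (zz2 s))
  + \<eta> * zz1 s * zz2 s * (g (zz1 s - 1) (zz2 s - 1) - g (zz1 s) (zz2 s))"
proof -
  obtain x a b where s: "s = (x, a, b)" by (cases s) auto
  have N0: "(\<Sum>(lam, \<zeta>)\<leftarrow>map (\<lambda>(a, \<nu>). ((\<lambda>s. a (fst s)), (\<nu>, 0::int, 0::int))) N.
        lam s * ((\<lambda>s. g (zz1 s) (zz2 s)) (shift s \<zeta>) - g (zz1 s) (zz2 s))) = 0"
    by (induction N) (auto simp: shift_def zz1_def zz2_def)
  have ann: "\<eta> * real a * real b * (g (real (nat (int a - 1))) (real (nat (int b - 1))) - g a b)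
     = \<eta> * real a * real b * (g (real a - 1) (real b - 1) - g a b)"
    by (cases "a = 0 \<or> b = 0") (auto simp: of_nat_diff)
  show ?thesis
    unfolding generator_def full_reactions_def
    using N0 ann by (simp add: s shift_def zz1_def zz2_def xx_def algebra_simps)
qed

theorem mainTheorem1:
  fixes N :: "(((('d::finite) \<Rightarrow> nat) \<Rightarrow> real) \<times> ('d \<Rightarrow> int)) list"
    and i1 l :: 'd
    and \<mu> \<theta> \<eta> k :: real
    and F :: "nat \<Rightarrow> real"
    and \<pi> :: "'d state pmf"
  defines "R \<equiv> full_reactions N i1 l \<mu> \<theta> \<eta> k F"
  defines "E \<equiv> measure_pmf.expectation \<pi>"
  assumes pos: "\<mu> > 0" "\<theta> > 0" "\<eta> > 0" "k > 0"
    and F_nonneg: "\<And>n. F n \<ge> 0"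
    and N_nonneg: "\<And>a \<nu> x. (a, \<nu>) \<in> set N \<Longrightarrow> a x \<ge> 0"
    and N_ok: "\<And>a \<nu> x. (a, \<nu>) \<in> set N \<Longrightarrow> a x > 0 \<Longrightarrow> (\<forall>i. int (x i) + \<nu> i \<ge> 0)"
    and stat: "stationary R \<pi>"
    and int_fin: "\<And>f. f \<in> {xx l, zz1, zz2, \<lambda>s. xx l s * zz1 s, \<lambda>s. xx l s * zz2 s,
                         \<lambda>s. zz1 s * zz2 s, \<lambda>s. zz1 s ^ 2, \<lambda>s. zz2 s ^ 2,
                         \<lambda>s. zz1 s ^ 2 * zz2 s, \<lambda>s. zz1 s * zz2 s ^ 2}
                   \<Longrightarrow> integrable (measure_pmf \<pi>) f"
    and moment_eqs: "\<And>f. f \<in> {zz1, zz2, \<lambda>s. zz1 s ^ 2, \<lambda>s. zz2 s ^ 2, \<lambda>s. (zz1 s - zz2 s) ^ 2}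
                   \<Longrightarrow> integrable (measure_pmf \<pi>) (generator R f) \<and> E (generator R f) = 0"
  shows "cov_pmf \<pi> (xx l) (\<lambda>s. zz1 s - zz2 s) = \<mu> / \<theta>
    \<and> E (\<lambda>s. zz1 s * zz2 s) = \<mu> / \<eta>
    \<and> E (\<lambda>s. zz1 s ^ 2 * zz2 s) = \<mu> / \<eta> * (1 + E zz1)
    \<and> E (\<lambda>s. zz1 s * zz2 s ^ 2) = (\<mu> + \<theta> * E (\<lambda>s. xx l s * zz2 s)) / \<eta>"
proof -
  let ?M = "measure_pmf \<pi>"
  have ix: "integrable ?M (xx l)" and i1: "integrable ?M zz1" and i2: "integrable ?M zz2"
    and ix1: "integrable ?M (\<lambda>s. xx l s * zz1 s)" and ix2: "integrable ?M (\<lambda>s. xx l s * zz2 s)"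
    and i12: "integrable ?M (\<lambda>s. zz1 s * zz2 s)"
    and i112: "integrable ?M (\<lambda>s. zz1 s ^ 2 * zz2 s)"
    and i122: "integrable ?M (\<lambda>s. zz1 s * zz2 s ^ 2)"
    by (auto intro: int_fin)
  have g1: "generator R zz1 = (\<lambda>s. \<mu> - \<eta> * (zz1 s * zz2 s))"
    using gen_z[of N i1 l \<mu> \<theta> \<eta> k F "\<lambda>a b. a"] by (auto simp: R_def algebra_simps)
  have g2: "generator R zz2 = (\<lambda>s. \<theta> * xx l s - \<eta> * (zz1 s * zz2 s))"
    using gen_z[of N i1 l \<mu> \<theta> \<eta> k F "\<lambda>a b. b"] by (auto simp: R_def algebra_simps)
  have g3: "generator R (\<lambda>s. zz1 s ^ 2) = (\<lambda>s. 2 * \<mu> * zz1 s + \<mu> - 2 * \<eta> * (zz1 s ^ 2 * zz2 s)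
       + \<eta> * (zz1 s * zz2 s))"
    using gen_z[of N i1 l \<mu> \<theta> \<eta> k F "\<lambda>a b. a ^ 2"] by (auto simp: R_def algebra_simps power2_eq_square)
  have g4: "generator R (\<lambda>s. zz2 s ^ 2) = (\<lambda>s. 2 * \<theta> * (xx l s * zz2 s) + \<theta> * xx l s
       - 2 * \<eta> * (zz1 s * zz2 s ^ 2) + \<eta> * (zz1 s * zz2 s))"
    using gen_z[of N i1 l \<mu> \<theta> \<eta> k F "\<lambda>a b. b ^ 2"] by (auto simp: R_def algebra_simps power2_eq_square)
  have g5: "generator R (\<lambda>s. (zz1 s - zz2 s) ^ 2) = (\<lambda>s. 2 * \<mu> * zz1 s - 2 * \<mu> * zz2 s + \<mu>
       - 2 * \<theta> * (xx l s * zz1 s) + 2 * \<theta> * (xx l s * zz2 s) + \<theta> * xx l s)"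
    using gen_z[of N i1 l \<mu> \<theta> \<eta> k F "\<lambda>a b. (a - b) ^ 2"] by (auto simp: R_def algebra_simps power2_eq_square)
  have e1: "\<mu> - \<eta> * E (\<lambda>s. zz1 s * zz2 s) = 0"
    using moment_eqs[of zz1] i12 unfolding g1 E_def by simp
  have e2: "\<theta> * E (xx l) - \<eta> * E (\<lambda>s. zz1 s * zz2 s) = 0"
    using moment_eqs[of zz2] i12 ix unfolding g2 E_def by simp
  have e3: "2 * \<mu> * E zz1 + \<mu> - 2 * \<eta> * E (\<lambda>s. zz1 s ^ 2 * zz2 s) + \<eta> * E (\<lambda>s. zz1 s * zz2 s) = 0"
    using moment_eqs[of "\<lambda>s. zz1 s ^ 2"] i12 i1 i112 unfolding g3 E_def by simp
  have e4: "2 * \<theta> * E (\<lambda>s. xx l s * zz2 s) + \<theta> * E (xx l)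
       - 2 * \<eta> * E (\<lambda>s. zz1 s * zz2 s ^ 2) + \<eta> * E (\<lambda>s. zz1 s * zz2 s) = 0"
    using moment_eqs[of "\<lambda>s. zz2 s ^ 2"] i12 ix ix2 i122 unfolding g4 E_def by simp
  have e5: "2 * \<mu> * E zz1 - 2 * \<mu> * E zz2 + \<mu>
       - 2 * \<theta> * E (\<lambda>s. xx l s * zz1 s) + 2 * \<theta> * E (\<lambda>s. xx l s * zz2 s) + \<theta> * E (xx l) = 0"
    using moment_eqs[of "\<lambda>s. (zz1 s - zz2 s) ^ 2"] i1 i2 ix ix1 ix2 unfolding g5 E_def by simp
  have cov: "cov_pmf \<pi> (xx l) (\<lambda>s. zz1 s - zz2 s) = E (\<lambda>s. xx l s * zz1 s) - E (\<lambda>s. xx l s * zz2 s)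
      - E (xx l) * (E zz1 - E zz2)"
  proof -
    have d: "E (\<lambda>s. zz1 s - zz2 s) = E zz1 - E zz2" using i1 i2 unfolding E_def by simp
    have "cov_pmf \<pi> (xx l) (\<lambda>s. zz1 s - zz2 s) = E (\<lambda>s. (xx l s * zz1 s - xx l s * zz2 s)
        - E (xx l) * (zz1 s - zz2 s) - (E zz1 - E zz2) * xx l s + E (xx l) * (E zz1 - E zz2))"
      unfolding cov_pmf_def d[unfolded E_def] E_def
      by (intro Bochner_Integration.integral_cong refl) (simp add: algebra_simps)
    also have "\<dots> = E (\<lambda>s. xx l s * zz1 s) - E (\<lambda>s. xx l s * zz2 s)
      - E (xx l) * (E zz1 - E zz2)"
      using i1 i2 ix ix1 ix2 unfolding E_def by (simp add: algebra_simps)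
    finally show ?thesis .
  qed
  have a1: "E (\<lambda>s. zz1 s * zz2 s) = \<mu> / \<eta>" using e1 pos by (simp add: field_simps)
  have a0: "E (xx l) = \<mu> / \<theta>" using e1 e2 pos by (simp add: field_simps)
  have a2: "E (\<lambda>s. zz1 s ^ 2 * zz2 s) = \<mu> / \<eta> * (1 + E zz1)"
  proof -
    have "\<eta> * (2 * E (\<lambda>s. zz1 s ^ 2 * zz2 s)) = \<eta> * (2 * ((\<mu> / \<eta>) * (1 + E zz1)))"
      using e3 a1 pos by (simp add: algebra_simps)
    thus ?thesis using pos by (subst (asm) mult_left_cancel) auto
  qed
  have a3: "E (\<lambda>s. zz1 s * zz2 s ^ 2) = (\<mu> + \<theta> * E (\<lambda>s. xx l s * zz2 s)) / \<eta>"
  proof -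
    have "2 * (\<eta> * E (\<lambda>s. zz1 s * zz2 s ^ 2)) = 2 * (\<mu> + \<theta> * E (\<lambda>s. xx l s * zz2 s))"
      using e4 e2 e1 pos by (simp add: algebra_simps)
    thus ?thesis using pos by (simp add: field_simps)
  qed
  have a4: "E (\<lambda>s. xx l s * zz1 s) - E (\<lambda>s. xx l s * zz2 s) = (\<mu> * (E zz1 - E zz2) + \<mu>) / \<theta>"
  proof -
    have "2 * (\<theta> * (E (\<lambda>s. xx l s * zz1 s) - E (\<lambda>s. xx l s * zz2 s))) = 2 * (\<mu> * (E zz1 - E zz2) + \<mu>)"
      using e5 e2 e1 pos by (simp add: algebra_simps)
    thus ?thesis using pos by (simp add: field_simps)
  qed
  have a5: "cov_pmf \<pi> (xx l) (\<lambda>s. zz1 s - zz2 s) = \<mu> / \<theta>"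
    unfolding cov a4 a0 using pos by (simp add: field_simps)
  show ?thesis using a1 a2 a3 a5 by blast
qed

end
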